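(* Let $B\subset GL_n(\mathbb{C})$ be the group of invertible upper triangular matrices acting on $\mathfrak{b}^*=\mathfrak{gl}_n/\mathfrak{n}^+$ by conjugation, $b\cdot s=bsb^{-1}$. Then $\mathbb{C}[\mathfrak{b}^*]^B=\mathbb{C}[\operatorname{tr}(s)]$.
   Context: $\mathfrak{n}^+$ denotes the strictly upper triangular $n\times n$ matrices; $\mathfrak{b}^*$ is identified with $\mathfrak{gl}_n/\mathfrak{n}^+$ (equivalently with lower triangular matrices), and conjugation by $B$ preserves $\mathfrak{n}^+$ so descends to the quotient. The trace is well defined on $\mathfrak{gl}_n/\mathfrak{n}^+$. *)

theory Defs
  imports "HOL-Analysis.Analysis" "HOL-Computational_Algebra.Polynomial"
begin

inductive poly_fun :: "(complex^'n^'n \<Rightarrow> complex) \<Rightarrow> bool" where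
  pf_const: "poly_fun (\<lambda>s. c)"
| pf_coord: "poly_fun (\<lambda>s. s $ i $ j)"
| pf_add: "poly_fun f \<Longrightarrow> poly_fun g \<Longrightarrow> poly_fun (\<lambda>s. f s + g s)"
| pf_mult: "poly_fun f \<Longrightarrow> poly_fun g \<Longrightarrow> poly_fun (\<lambda>s. f s * g s)"

definition strictly_upper :: "complex^('n::{finite,linorder})^('n::{finite,linorder}) \<Rightarrow> bool" where
  "strictly_upper N \<longleftrightarrow> (\<forall>i j. j \<le> i \<longrightarrow> N $ i $ j = 0)"

definition upper_tri :: "complex^('n::{finite,linorder})^('n::{finite,linorder}) \<Rightarrow> bool" where
  "upper_tri b \<longleftrightarrow> (\<forall>i j. j < i \<longrightarrow> b $ i $ j = 0)"

definition borel :: "(complex^('n::{finite,linorder})^('n::{finite,linorder})) set" where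
  "borel = {b. upper_tri b \<and> invertible b}"

text \<open>C[b^*] with b^* = gl_n / n^+: polynomial functions on gl_n constant on
  cosets of n^+, i.e. functions on the quotient.\<close>
definition coord_ring_bstar :: "(complex^('n::{finite,linorder})^('n::{finite,linorder}) \<Rightarrow> complex) set" where
  "coord_ring_bstar = {f. poly_fun f \<and> (\<forall>s N. strictly_upper N \<longrightarrow> f (s + N) = f s)}"

definition B_invariants :: "(complex^('n::{finite,linorder})^('n::{finite,linorder}) \<Rightarrow> complex) set" where
  "B_invariants = {f \<in> coord_ring_bstar.
      \<forall>b \<in> borel. \<forall>s. f (b ** s ** matrix_inv b) = f s}"

end

theory Submission
  imports Defs
begin

definition diagm :: "('n::finite \<Rightarrow> complex) \<Rightarrow> complex^'n^'n" where
  "diagm a = (\<chi> k l. if k = l then a k else 0)"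

definition elem :: "'n::finite \<Rightarrow> 'n \<Rightarrow> complex \<Rightarrow> complex^'n^'n" where
  "elem i j x = (\<chi> k l. if k = l then 1 else if k = i \<and> l = j then x else 0)"

definition phi :: "'n::{finite,linorder} \<Rightarrow> nat" where
  "phi i = card {m. m < i}"

lemma phi_less: "(j::'n::{finite,linorder}) < i \<Longrightarrow> phi j < phi i"
  unfolding phi_def by (rule psubset_card_mono) auto

lemma phi_le: "(j::'n::{finite,linorder}) \<le> i \<Longrightarrow> phi j \<le> phi i"
  by (metis order.order_iff_strict less_imp_le_nat phi_less)

lemma poly_fun_poly:
  "poly_fun f \<Longrightarrow> (\<forall>i j. \<exists>q. \<forall>t. M t $ i $ j = poly q t) \<Longrightarrow> \<exists>p. \<forall>t. f (M t) = poly p t"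
proof (induction rule: poly_fun.induct)
  case (pf_const c)
  then show ?case by (rule_tac x="[:c:]" in exI) simp
next
  case (pf_coord i j)
  then show ?case by blast
next
  case (pf_add f g)
  then obtain p q where "\<forall>t. f (M t) = poly p t" "\<forall>t. g (M t) = poly q t" by blast
  then show ?case by (rule_tac x="p+q" in exI) simp
next
  case (pf_mult f g)
  then obtain p q where "\<forall>t. f (M t) = poly p t" "\<forall>t. g (M t) = poly q t" by blast
  then show ?case by (rule_tac x="p*q" in exI) simp
qed

lemma poly_const_nonzero:
  fixes p :: "complex poly"
  assumes "\<forall>t. t \<noteq> 0 \<longrightarrow> poly p t = c"
  shows "poly p 0 = c"
proof (rule ccontr)
  assume ne: "poly p 0 \<noteq> c"
  let ?q = "p - [:c:]"
  have "?q \<noteq> 0"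
  proof
    assume "?q = 0"
    then have "p = [:c:]" by simp
    then show False using ne by simp
  qed
  then have "finite {t. poly ?q t = 0}" by (rule poly_roots_finite)
  moreover have "UNIV - {0} \<subseteq> {t. poly ?q t = 0}" using assms by auto
  ultimately have "finite (UNIV - {0::complex})" by (rule rev_finite_subset)
  then show False by (simp add: infinite_UNIV_char_0)
qed

lemma matrix_inv_eq:
  fixes A B :: "complex^'n^'n"
  assumes "A ** B = mat 1" "B ** A = mat 1"
  shows "matrix_inv A = B"
proof -
  let ?C = "matrix_inv A"
  have "A ** ?C = mat 1 \<and> ?C ** A = mat 1"
    unfolding matrix_inv_def by (rule someI[of _ B]) (use assms in auto)
  then have "?C = ?C ** (A ** B)" "?C ** A = mat 1" by (simp_all add: assms matrix_mul_rid)
  then show ?thesis by (metis matrix_mul_assoc matrix_mul_lid)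
qed

lemma diagm_left: "(diagm d ** A) $ k $ l = d k * A $ k $ l"
proof -
  have "(diagm d ** A) $ k $ l = (\<Sum>m\<in>UNIV. if m = k then d k * A $ k $ l else 0)"
    unfolding matrix_matrix_mult_def diagm_def vec_lambda_beta by (rule sum.cong) auto
  then show ?thesis by simp
qed

lemma diagm_right: "(A ** diagm d) $ k $ l = A $ k $ l * d l"
proof -
  have "(A ** diagm d) $ k $ l = (\<Sum>m\<in>UNIV. if m = l then A $ k $ l * d l else 0)"
    unfolding matrix_matrix_mult_def diagm_def vec_lambda_beta by (rule sum.cong) auto
  then show ?thesis by simp
qed

lemma elem_left: "i \<noteq> j \<Longrightarrow> (elem i j x ** A) $ k $ l = A$k$l + (if k = i then x * A$j$l else 0)"
proof -
  assume ij: "i \<noteq> j"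
  have "(elem i j x ** A) $ k $ l = (\<Sum>m\<in>UNIV. (if m = k then A$k$l else 0) + (if m = j then (if k = i then x * A$j$l else 0) else 0))"
    unfolding matrix_matrix_mult_def elem_def vec_lambda_beta using ij by (intro sum.cong) auto
  then show ?thesis by (simp add: sum.distrib)
qed

lemma elem_right: "i \<noteq> j \<Longrightarrow> (A ** elem i j x) $ k $ l = A$k$l + (if l = j then A$k$i * x else 0)"
proof -
  assume ij: "i \<noteq> j"
  have "(A ** elem i j x) $ k $ l = (\<Sum>m\<in>UNIV. (if m = l then A$k$l else 0) + (if m = i then (if l = j then A$k$i * x else 0) else 0))"
    unfolding matrix_matrix_mult_def elem_def vec_lambda_beta using ij by (intro sum.cong) auto
  then show ?thesis by (simp add: sum.distrib)
qed

lemma torus: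
  fixes f :: "complex^('n::{finite,linorder})^('n::{finite,linorder}) \<Rightarrow> complex"
  assumes "f \<in> B_invariants"
  shows "f s = f (diagm (\<lambda>k. s$k$k))"
proof -
  have pf: "poly_fun f" and Ninv: "\<And>s N. strictly_upper N \<Longrightarrow> f (s + N) = f s"
    and Binv: "\<And>b s. b \<in> borel \<Longrightarrow> f (b ** s ** matrix_inv b) = f s"
    using assms unfolding B_invariants_def coord_ring_bstar_def by auto
  define L where "L = (\<chi> i j. if i < j then 0 else s$i$j)"
  define N where "N = (\<chi> i j. if i < j then - s$i$j else (0::complex))"
  have "strictly_upper N" unfolding strictly_upper_def N_def by auto
  moreover have "L = s + N" unfolding L_def N_def by (simp add: vec_eq_iff)
  ultimately have fL: "f L = f s" using Ninv by simp
  define M where "M t = (\<chi> i j. if j \<le> i then s$i$j * t^(phi i - phi j) else 0)" for t :: complex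
  have Mt: "f (M t) = f s" if t0: "t \<noteq> 0" for t
  proof -
    define D :: "complex^('n::{finite,linorder})^('n::{finite,linorder})" where "D = diagm (\<lambda>i. t ^ phi i)"
    define Di :: "complex^('n::{finite,linorder})^('n::{finite,linorder})" where "Di = diagm (\<lambda>i. inverse (t ^ phi i))"
    have 1: "D ** Di = mat 1" "Di ** D = mat 1"
      unfolding D_def Di_def by (simp_all add: vec_eq_iff diagm_left) (simp_all add: diagm_def mat_def t0)
    have "D \<in> borel" unfolding borel_def upper_tri_def invertible_def
      using 1 by (auto simp: D_def diagm_def)
    then have "f (D ** L ** matrix_inv D) = f L" by (rule Binv)
    moreover have "matrix_inv D = Di" using 1 by (rule matrix_inv_eq)
    moreover have "D ** L ** Di = M t"
    proof -
      have "(D ** L ** Di) $ i $ j = M t $ i $ j" for i j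
      proof (cases "j \<le> i")
        case True
        then have le: "phi j \<le> phi i" by (rule phi_le)
        have "t ^ phi i * s $ i $ j * inverse (t ^ phi j) = s$i$j * t^(phi i - phi j)"
          using le t0 by (simp add: power_diff field_simps)
        then show ?thesis using True
          by (simp add: D_def Di_def diagm_left diagm_right L_def M_def)
      next
        case False
        then show ?thesis by (simp add: D_def Di_def diagm_left diagm_right L_def M_def)
      qed
      then show ?thesis by (simp add: vec_eq_iff)
    qed
    ultimately show ?thesis using fL by simp
  qed
  have "\<exists>p. \<forall>t. f (M t) = poly p t"
  proof (rule poly_fun_poly[OF pf], intro allI)
    fix i j
    show "\<exists>q. \<forall>t. M t $ i $ j = poly q t"
      by (rule exI[of _ "if j \<le> i then monom (s$i$j) (phi i - phi j) else 0"])
         (simp add: M_def poly_monom)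
  qed
  then obtain p where p: "\<And>t. f (M t) = poly p t" by blast
  have "poly p 0 = f s" by (rule poly_const_nonzero) (use Mt p in auto)
  moreover have "M 0 = diagm (\<lambda>k. s$k$k)"
  proof -
    have "M 0 $ i $ j = diagm (\<lambda>k. s$k$k) $ i $ j" for i j
    proof (cases "j < i")
      case True
      then have "phi j < phi i" by (rule phi_less)
      then show ?thesis using True by (simp add: M_def diagm_def)
    next
      case False
      then show ?thesis by (auto simp: M_def diagm_def)
    qed
    then show ?thesis by (simp add: vec_eq_iff)
  qed
  ultimately show ?thesis using p by metis
qed


lemma transfer:
  fixes f :: "complex^('n::{finite,linorder})^('n::{finite,linorder}) \<Rightarrow> complex"
  assumes fB: "f \<in> B_invariants" and ij: "i < j"
  shows "f (diagm a) = f (diagm (\<lambda>k. if k = i then a k + x else if k = j then a k - x else a k))"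
proof -
  have Binv: "\<And>b s. b \<in> borel \<Longrightarrow> f (b ** s ** matrix_inv b) = f s"
    using fB unfolding B_invariants_def by auto
  have ne: "i \<noteq> j" using ij by simp
  define S :: "complex^('n::{finite,linorder})^('n::{finite,linorder})"
    where "S = (\<chi> k l. if k = l then a k else if k = j \<and> l = i then 1 else 0)"
  have "diagm (\<lambda>k. S$k$k) = diagm a" by (simp add: S_def)
  then have 1: "f (diagm a) = f S" using torus[OF fB, of S] by simp
  define b where "b = elem i j x"
  define b' where "b' = elem i j (-x)"
  have inv: "b ** b' = mat 1" "b' ** b = mat 1"
    unfolding b_def b'_def using ne
    by (simp_all add: vec_eq_iff elem_left elem_right) (auto simp: elem_def mat_def)
  have "b \<in> borel" unfolding borel_def upper_tri_def invertible_def
    using inv ij by (auto simp: b_def elem_def)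
  then have "f (b ** S ** matrix_inv b) = f S" by (rule Binv)
  moreover have "matrix_inv b = b'" using inv by (rule matrix_inv_eq)
  ultimately have 2: "f (b ** S ** b') = f S" by simp
  have "diagm (\<lambda>k. (b ** S ** b')$k$k) = diagm (\<lambda>k. if k = i then a k + x else if k = j then a k - x else a k)"
  proof -
    have "(b ** S ** b')$k$k = (if k = i then a k + x else if k = j then a k - x else a k)" for k
      using ne unfolding b_def b'_def by (simp add: elem_left elem_right S_def)
    then show ?thesis by simp
  qed
  then show ?thesis using 1 2 torus[OF fB, of "b ** S ** b'"] by simp
qed


lemma transfer2:
  fixes f :: "complex^('n::{finite,linorder})^('n::{finite,linorder}) \<Rightarrow> complex"
  assumes fB: "f \<in> B_invariants" and ij: "i \<noteq> j"
  shows "f (diagm a) = f (diagm (\<lambda>k. if k = i then a k + x else if k = j then a k - x else a k))"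
proof (cases "i < j")
  case True
  then show ?thesis using transfer[OF fB] by blast
next
  case False
  then have "j < i" using ij by simp
  from transfer[OF fB this, of a "-x"]
  have "f (diagm a) = f (diagm (\<lambda>k. if k = j then a k + - x else if k = i then a k - - x else a k))" .
  moreover have "(\<lambda>k. if k = j then a k + - x else if k = i then a k - - x else a k)
     = (\<lambda>k. if k = i then a k + x else if k = j then a k - x else a k)" using ij by (auto simp: fun_eq_iff)
  ultimately show ?thesis by simp
qed

lemma gather:
  fixes f :: "complex^('n::{finite,linorder})^('n::{finite,linorder}) \<Rightarrow> complex"
  assumes fB: "f \<in> B_invariants"
  shows "finite S \<Longrightarrow> i0 \<notin> S \<Longrightarrow>
     f (diagm a) = f (diagm (\<lambda>k. if k \<in> S then 0 else if k = i0 then a i0 + sum a S else a k))"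
proof (induction S rule: finite_induct)
  case empty
  have "(\<lambda>k. if k \<in> {} then 0 else if k = i0 then a i0 + sum a {} else a k) = a" by auto
  then show ?case by simp
next
  case (insert k S)
  let ?aS = "\<lambda>k. if k \<in> S then 0 else if k = i0 then a i0 + sum a S else a k"
  have ne: "i0 \<noteq> k" using insert by auto
  have "f (diagm a) = f (diagm ?aS)" using insert by simp
  also have "\<dots> = f (diagm (\<lambda>m. if m = i0 then ?aS m + a k else if m = k then ?aS m - a k else ?aS m))"
    by (rule transfer2[OF fB ne])
  also have "(\<lambda>m. if m = i0 then ?aS m + a k else if m = k then ?aS m - a k else ?aS m)
     = (\<lambda>m. if m \<in> insert k S then 0 else if m = i0 then a i0 + sum a (insert k S) else a m)"
    using insert ne by (auto simp: fun_eq_iff)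
  finally show ?case .
qed

lemma poly_fun_sum:
  "finite A \<Longrightarrow> (\<forall>i\<in>A. poly_fun (g i)) \<Longrightarrow> poly_fun (\<lambda>s. \<Sum>i\<in>A. g i s)"
proof (induction A rule: finite_induct)
  case empty
  then show ?case using pf_const[of 0] by simp
next
  case (insert x F)
  then have "poly_fun (\<lambda>s. g x s + (\<Sum>i\<in>F. g i s))"
    by (intro pf_add) auto
  then show ?case using insert by simp
qed

lemma poly_fun_trace_poly:
  "poly_fun (\<lambda>s::complex^'n^'n. poly p (trace s))"
proof -
  have tr: "poly_fun (\<lambda>s::complex^'n^'n. trace s)"
    unfolding trace_def by (rule poly_fun_sum) (auto intro: pf_coord)
  show ?thesis
  proof (induction p)
    case 0
    then show ?case using pf_const[of 0] by simp
  next
    case (pCons a p)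
    have "poly_fun (\<lambda>s::complex^'n^'n. a + trace s * poly p (trace s))"
      by (rule pf_add[OF pf_const pf_mult[OF tr pCons.IH]])
    then show ?case by simp
  qed
qed

theorem mainTheorem7:
  shows "(B_invariants :: (complex^('n::{finite,linorder})^('n::{finite,linorder}) \<Rightarrow> complex) set)
           = {(\<lambda>s. poly p (trace s)) | p :: complex poly. True}"
proof
  show "(B_invariants :: (complex^('n::{finite,linorder})^('n::{finite,linorder}) \<Rightarrow> complex) set)
           \<subseteq> {(\<lambda>s. poly p (trace s)) | p :: complex poly. True}"
  proof
    fix f :: "complex^('n::{finite,linorder})^('n::{finite,linorder}) \<Rightarrow> complex"
    assume fB: "f \<in> B_invariants"
    then have pf: "poly_fun f" unfolding B_invariants_def coord_ring_bstar_def by auto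
    define i0 :: 'n where "i0 = undefined"
    define M :: "complex \<Rightarrow> complex^('n::{finite,linorder})^('n::{finite,linorder})"
      where "M t = diagm (\<lambda>k. if k = i0 then t else 0)" for t
    have "\<exists>p. \<forall>t. f (M t) = poly p t"
    proof (rule poly_fun_poly[OF pf], intro allI)
      fix i j
      show "\<exists>q. \<forall>t. M t $ i $ j = poly q t"
        by (rule exI[of _ "if i = j \<and> i = i0 then [:0,1:] else 0"]) (auto simp: M_def diagm_def)
    qed
    then obtain p where p: "\<And>t. f (M t) = poly p t" by blast
    have "f s = poly p (trace s)" for s
    proof -
      let ?a = "\<lambda>k. s$k$k"
      have "f s = f (diagm ?a)" by (rule torus[OF fB])
      also have "\<dots> = f (diagm (\<lambda>k. if k \<in> UNIV - {i0} then 0 else if k = i0 then ?a i0 + sum ?a (UNIV - {i0}) else ?a k))"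
        by (rule gather[OF fB]) auto
      also have "(\<lambda>k. if k \<in> UNIV - {i0} then 0 else if k = i0 then ?a i0 + sum ?a (UNIV - {i0}) else ?a k)
          = (\<lambda>k. if k = i0 then trace s else 0)"
        by (auto simp: fun_eq_iff trace_def sum.remove[of UNIV i0])
      finally show ?thesis using p M_def by simp
    qed
    then show "f \<in> {(\<lambda>s. poly p (trace s)) | p :: complex poly. True}" by auto
  qed
next
  show "{(\<lambda>s. poly p (trace s)) | p :: complex poly. True}
     \<subseteq> (B_invariants :: (complex^('n::{finite,linorder})^('n::{finite,linorder}) \<Rightarrow> complex) set)"
  proof clarify
    fix p :: "complex poly"
    have N: "trace (s + N) = trace s" if "strictly_upper N" for s N :: "complex^('n::{finite,linorder})^('n::{finite,linorder})"
      using that by (simp add: trace_add trace_def strictly_upper_def)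
    have B: "trace (b ** s ** matrix_inv b) = trace s" if "b \<in> borel"
      for s b :: "complex^('n::{finite,linorder})^('n::{finite,linorder})"
    proof -
      have "invertible b" using that by (simp add: borel_def)
      then have "b ** matrix_inv b = mat 1 \<and> matrix_inv b ** b = mat 1"
        unfolding invertible_def matrix_inv_def by (rule someI_ex)
      then have "trace (matrix_inv b ** (b ** s)) = trace s"
        by (simp add: matrix_mul_assoc matrix_mul_lid)
      then show ?thesis by (simp add: trace_mul_sym[of "b ** s"])
    qed
    show "(\<lambda>s. poly p (trace s)) \<in> (B_invariants :: (complex^('n::{finite,linorder})^('n::{finite,linorder}) \<Rightarrow> complex) set)"
      unfolding B_invariants_def coord_ring_bstar_def
      using poly_fun_trace_poly N B by auto
  qed
qed

end
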